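(* (a) For each integer $N\ge0$, the set $\{(a,b)\in P: N(a,b)\le N\}$ is relatively closed in $P$. (b) For every sequence $(a_\nu,b_\nu)$ in $P$ converging to a point of $P'\setminus\{(0,-1)\}$, one has $N(a_\nu,b_\nu)\to\infty$.
   Context: Let $P$ be the set of $(a,b)\in\mathbb{R}^2$ such that $h(x)=x^2+ax+b$ has no multiple root and $h(x)>0$ for all real $x$ with $|x|\ge1$ (equivalently: $a^2<4b$, or $a^2>4b$ and $|a|<\min\{2,b+1\}$). Let $P'=\{(a,b)\in\mathbb{R}^2: a^2=4b\ge4\}\cup\{(a,b)\in\mathbb{R}^2:|a|=b+1\le2\}$. For $(a,b)\in P$ let $C_{a,b}$ be the affine curve $y^2+(x^2-1)(x^2+ax+b)=0$, $\mathbb{R}[C_{a,b}]=\mathbb{R}[x,y]/(y^2+(x^2-1)(x^2+ax+b))$. For $g=u(x)+v(x)y$ put $\delta(g)=\max\{\deg u,\deg v+2\}$, and for $0\ne g$ let $\theta(g)$ be the least integer $e\ge0$ with $g=\sum_i g_i^2$, $g_i\in\mathbb{R}[C_{a,b}]$, $\delta(g_i)\le e$. Define $N(a,b):=\theta(1-x^2)$ computed in $\mathbb{R}[C_{a,b}]$. *)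

theory Defs
  imports "HOL-Analysis.Analysis" "HOL-Computational_Algebra.Polynomial" "HOL-Library.Extended_Nat"
begin

definition hpoly :: "real \<Rightarrow> real \<Rightarrow> real poly" where
  "hpoly a b = [:b, a, 1:]"

definition Pset :: "(real \<times> real) set" where
  "Pset = {(a, b). (\<forall>z::complex. \<not> (poly (map_poly of_real (hpoly a b)) z = 0 \<and>
                                   poly (pderiv (map_poly of_real (hpoly a b))) z = 0))
                 \<and> (\<forall>x::real. \<bar>x\<bar> \<ge> 1 \<longrightarrow> poly (hpoly a b) x > 0)}"

definition P'set :: "(real \<times> real) set" where
  "P'set = {(a, b). a\<^sup>2 = 4 * b \<and> 4 * b \<ge> 4} \<union> {(a, b). \<bar>a\<bar> = b + 1 \<and> b + 1 \<le> 2}"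

text \<open>Elements of R[C_{a,b}] = R[x,y]/(y^2 + f), f = (x^2-1) h, in their unique normal form
  u(x) + v(x) y, represented as the pair (u, v).\<close>
definition fpoly :: "real \<Rightarrow> real \<Rightarrow> real poly" where
  "fpoly a b = [:-1, 0, 1:] * hpoly a b"

definition cmult :: "real \<Rightarrow> real \<Rightarrow> real poly \<times> real poly \<Rightarrow> real poly \<times> real poly \<Rightarrow> real poly \<times> real poly" where
  "cmult a b g1 g2 = (fst g1 * fst g2 - snd g1 * snd g2 * fpoly a b,
                      fst g1 * snd g2 + fst g2 * snd g1)"

text \<open>delta(u + v y) = max(deg u, deg v + 2), with deg 0 = -infinity (so a zero part is ignored).\<close>
definition delta :: "real poly \<times> real poly \<Rightarrow> nat" where
  "delta g = (if snd g = 0 then degree (fst g) else max (degree (fst g)) (degree (snd g) + 2))"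

definition sos_bounded :: "real \<Rightarrow> real \<Rightarrow> real poly \<times> real poly \<Rightarrow> nat \<Rightarrow> bool" where
  "sos_bounded a b g e \<longleftrightarrow> (\<exists>gs :: (real poly \<times> real poly) list.
      (\<forall>gi \<in> set gs. delta gi \<le> e) \<and>
      fst g = (\<Sum>gi\<leftarrow>gs. fst (cmult a b gi gi)) \<and>
      snd g = (\<Sum>gi\<leftarrow>gs. snd (cmult a b gi gi)))"

text \<open>theta(g): least e with such a representation (infinity if none exists).\<close>
definition theta :: "real \<Rightarrow> real \<Rightarrow> real poly \<times> real poly \<Rightarrow> enat" where
  "theta a b g = Inf {enat e | e. sos_bounded a b g e}"

definition Nfun :: "real \<times> real \<Rightarrow> enat" where
  "Nfun p = theta (fst p) (snd p) ([:1, 0, -1:], 0)"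

end

theory Submission
  imports Defs
begin


definition hv :: "real \<Rightarrow> real \<Rightarrow> real \<Rightarrow> real" where
  "hv a b x = x^2 + a*x + b"

abbreviation TT :: "real poly \<times> real poly" where "TT \<equiv> ([:1, 0, -1:], 0)"

lemma sos_mono: "sos_bounded a b g e \<Longrightarrow> e \<le> e' \<Longrightarrow> sos_bounded a b g e'"
  unfolding sos_bounded_def by (meson order_trans)

lemma Nfun_le: "Nfun p \<le> enat n \<longleftrightarrow> sos_bounded (fst p) (snd p) TT n"
proof
  assume "sos_bounded (fst p) (snd p) TT n"
  then show "Nfun p \<le> enat n" unfolding Nfun_def theta_def by (auto intro: Inf_lower)
next
  let ?S = "{enat e | e. sos_bounded (fst p) (snd p) TT e}"
  assume H: "Nfun p \<le> enat n"
  have ne: "?S \<noteq> {}"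
  proof
    assume "?S = {}"
    then have "Nfun p = \<infinity>" unfolding Nfun_def theta_def by (simp add: Inf_enat_def)
    with H show False by simp
  qed
  then have "Inf ?S \<in> ?S" unfolding Inf_enat_def by (auto intro: LeastI)
  then obtain e where e: "Inf ?S = enat e" "sos_bounded (fst p) (snd p) TT e" by auto
  with H have "e \<le> n" unfolding Nfun_def theta_def by simp
  with e show "sos_bounded (fst p) (snd p) TT n" using sos_mono by blast
qed

lemma poly_sum_list_map: "poly (\<Sum>g\<leftarrow>gs. f g) x = (\<Sum>g\<leftarrow>gs. poly (f g) x)"
  by (induct gs) auto

lemma poly_fpoly: "poly (fpoly a b) x = (x^2 - 1) * hv a b x"
  by (simp add: fpoly_def hpoly_def hv_def power2_eq_square algebra_simps)

definition goodrep :: "real \<Rightarrow> real \<Rightarrow> nat \<Rightarrow> (real poly \<times> real poly) list \<Rightarrow> bool" where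
  "goodrep a b e gs \<longleftrightarrow> (\<forall>g\<in>set gs. delta g \<le> e) \<and>
     (\<forall>x. 1 - x^2 = (\<Sum>g\<leftarrow>gs. poly (fst g) x ^ 2 - poly (snd g) x ^ 2 * ((x^2 - 1) * hv a b x))) \<and>
     (\<forall>x. (\<Sum>g\<leftarrow>gs. poly (fst g) x * poly (snd g) x) = 0)"

lemma peq: "(p = (q::real poly)) \<longleftrightarrow> (\<forall>x. poly p x = poly q x)"
  by (metis ext poly_eq_poly_eq_iff)

lemma sos_eval: "sos_bounded a b TT e \<longleftrightarrow> (\<exists>gs. goodrep a b e gs)"
proof -
  have 1: "\<And>gs. (fst TT = (\<Sum>gi\<leftarrow>gs. fst (cmult a b gi gi))) \<longleftrightarrow>
     (\<forall>x. 1 - x^2 = (\<Sum>g\<leftarrow>gs. poly (fst g) x ^ 2 - poly (snd g) x ^ 2 * ((x^2 - 1) * hv a b x)))"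
  proof -
    fix gs :: "(real poly \<times> real poly) list"
    have "(fst TT = (\<Sum>gi\<leftarrow>gs. fst (cmult a b gi gi))) \<longleftrightarrow> (\<forall>x. poly (fst TT) x = poly (\<Sum>gi\<leftarrow>gs. fst (cmult a b gi gi)) x)"
      by (rule peq)
    also have "\<dots> \<longleftrightarrow> (\<forall>x. 1 - x^2 = (\<Sum>g\<leftarrow>gs. poly (fst g) x ^ 2 - poly (snd g) x ^ 2 * ((x^2 - 1) * hv a b x)))"
    proof -
      have "\<And>x. poly (\<Sum>gi\<leftarrow>gs. fst (cmult a b gi gi)) x = (\<Sum>g\<leftarrow>gs. poly (fst g) x ^ 2 - poly (snd g) x ^ 2 * ((x^2 - 1) * hv a b x))"
        by (simp add: poly_sum_list_map cmult_def poly_fpoly power2_eq_square)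
      moreover have "\<And>x. poly (fst TT) x = 1 - x^2" by (simp add: power2_eq_square)
      ultimately show ?thesis by simp
    qed
    finally show "?thesis gs" .
  qed
  have 2: "\<And>gs. (snd TT = (\<Sum>gi\<leftarrow>gs. snd (cmult a b gi gi))) \<longleftrightarrow>
     (\<forall>x. (\<Sum>g\<leftarrow>gs. poly (fst g) x * poly (snd g) x) = 0)"
  proof -
    fix gs :: "(real poly \<times> real poly) list"
    have "(snd TT = (\<Sum>gi\<leftarrow>gs. snd (cmult a b gi gi))) \<longleftrightarrow> (\<forall>x. poly (snd TT) x = poly (\<Sum>gi\<leftarrow>gs. snd (cmult a b gi gi)) x)"
      by (rule peq)
    also have "\<dots> \<longleftrightarrow> (\<forall>x. 2 * (\<Sum>g\<leftarrow>gs. poly (fst g) x * poly (snd g) x) = 0)"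
    proof -
      have "\<And>x. poly (\<Sum>gi\<leftarrow>gs. snd (cmult a b gi gi)) x = 2 * (\<Sum>g\<leftarrow>gs. poly (fst g) x * poly (snd g) x)"
        by (simp add: poly_sum_list_map cmult_def sum_list_const_mult[symmetric] mult.commute)
      then show ?thesis by simp
    qed
    also have "\<dots> \<longleftrightarrow> (\<forall>x. (\<Sum>g\<leftarrow>gs. poly (fst g) x * poly (snd g) x) = 0)" by simp
    finally show "?thesis gs" .
  qed
  show ?thesis unfolding sos_bounded_def goodrep_def using 1 2 by blast
qed


definition lagr :: "(nat \<Rightarrow> real) \<Rightarrow> nat \<Rightarrow> nat \<Rightarrow> real poly" where
  "lagr xs D j = smult (1 / (\<Prod>i\<in>{..D}-{j}. (xs j - xs i))) (\<Prod>i\<in>{..D}-{j}. [:- xs i, 1:])"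

lemma poly_lagr: "poly (lagr xs D j) x = (\<Prod>i\<in>{..D}-{j}. (x - xs i)) / (\<Prod>i\<in>{..D}-{j}. (xs j - xs i))"
  by (simp add: lagr_def poly_prod)

lemma degree_lagr: "j \<le> D \<Longrightarrow> degree (lagr xs D j) \<le> D"
proof -
  have "degree (\<Prod>i\<in>{..D}-{j}. [:- xs i, 1:]) \<le> (\<Sum>i\<in>{..D}-{j}. degree [:- xs i, 1:])"
    using degree_prod_sum_le[of "{..D}-{j}" "\<lambda>i. [:- xs i, 1:]"] by (simp add: o_def)
  also have "\<dots> = card ({..D}-{j})" by simp
  also assume "j \<le> D"
  then have "card ({..D}-{j}) = D" by simp
  finally show ?thesis unfolding lagr_def by simp
qed

lemma lagr_at:
  assumes "inj_on xs {..D}" "j \<le> D" "k \<le> D"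
  shows "poly (lagr xs D j) (xs k) = (if k = j then 1 else 0)"
proof (cases "k = j")
  case True
  have "(\<Prod>i\<in>{..D}-{j}. (xs j - xs i)) \<noteq> 0"
    using assms by (auto simp: inj_on_def)
  then show ?thesis using True by (simp add: poly_lagr)
next
  case False
  have "(\<Prod>i\<in>{..D}-{j}. (xs k - xs i)) = 0"
    using False assms by (intro prod_zero) auto
  then show ?thesis using False by (simp add: poly_lagr)
qed

lemma lagrange:
  assumes "inj_on xs {..D}" "degree q \<le> D"
  shows "q = (\<Sum>j\<le>D. smult (poly q (xs j)) (lagr xs D j))"
proof (rule poly_eqI_degree[where A = "xs ` {..D}"])
  fix x assume "x \<in> xs ` {..D}"
  then obtain k where k: "k \<le> D" "x = xs k" by auto
  have "poly (\<Sum>j\<le>D. smult (poly q (xs j)) (lagr xs D j)) x = (\<Sum>j\<le>D. poly q (xs j) * poly (lagr xs D j) (xs k))"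
    by (simp add: poly_sum k)
  also have "\<dots> = (\<Sum>j\<le>D. if j = k then poly q (xs k) else 0)"
    by (rule sum.cong) (auto simp: lagr_at[OF assms(1) _ k(1)])
  also have "\<dots> = poly q x" using k by simp
  finally show "poly q x = poly (\<Sum>j\<le>D. smult (poly q (xs j)) (lagr xs D j)) x" by simp
next
  have c: "card (xs ` {..D}) = Suc D" using card_image[OF assms(1)] by simp
  show "degree q < card (xs ` {..D})" using c assms by simp
  have "degree (\<Sum>j\<le>D. smult (poly q (xs j)) (lagr xs D j)) \<le> D"
    by (intro degree_sum_le) (auto intro: order_trans[OF degree_smult_le] degree_lagr)
  then show "degree (\<Sum>j\<le>D. smult (poly q (xs j)) (lagr xs D j)) < card (xs ` {..D})" using c by simp
qed

lemma lagrange_eval: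
  assumes "inj_on xs {..D}" "degree q \<le> D"
  shows "poly q x = (\<Sum>j\<le>D. poly q (xs j) * poly (lagr xs D j) x)"
  by (subst lagrange[OF assms]) (simp add: poly_sum)


definition Vp :: "(real poly \<times> real poly) list \<Rightarrow> real poly" where
  "Vp gs = (\<Sum>g\<leftarrow>gs. snd g * snd g)"

lemma poly_Vp: "poly (Vp gs) x = (\<Sum>g\<leftarrow>gs. poly (snd g) x ^ 2)"
  by (simp add: Vp_def poly_sum_list_map power2_eq_square)

lemma Vp_nonneg: "poly (Vp gs) x \<ge> 0"
  unfolding poly_Vp by (induct gs) auto

lemma degree_sum_list_le: "(\<And>g. g \<in> set gs \<Longrightarrow> degree (f g) \<le> B) \<Longrightarrow> degree (\<Sum>g\<leftarrow>gs. f g) \<le> (B::nat)"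
  by (induct gs) (auto intro: order_trans[OF degree_add_le])

lemma delta_snd: "delta g \<le> e \<Longrightarrow> degree (snd g) \<le> e"
  unfolding delta_def by (auto split: if_splits)

lemma delta_fst: "delta g \<le> e \<Longrightarrow> degree (fst g) \<le> e"
  unfolding delta_def by (auto split: if_splits)

lemma degree_Vp: "goodrep a b e gs \<Longrightarrow> degree (Vp gs) \<le> 2 * e"
  unfolding Vp_def
proof (rule degree_sum_list_le)
  fix g assume "goodrep a b e gs" "g \<in> set gs"
  then have "degree (snd g) \<le> e" using delta_snd unfolding goodrep_def by blast
  then show "degree (snd g * snd g) \<le> 2 * e" using degree_mult_le[of "snd g" "snd g"] by linarith
qed

lemma rep_ineq:
  assumes "goodrep a b e gs"
  shows "(1 - x^2) * (1 - hv a b x * poly (Vp gs) x) \<ge> 0"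
proof -
  have "1 - x^2 = (\<Sum>g\<leftarrow>gs. poly (fst g) x ^ 2 - poly (snd g) x ^ 2 * ((x^2 - 1) * hv a b x))"
    using assms unfolding goodrep_def by blast
  also have "\<dots> = (\<Sum>g\<leftarrow>gs. poly (fst g) x ^ 2) - poly (Vp gs) x * ((x^2 - 1) * hv a b x)"
    by (simp add: poly_Vp sum_list_subtractf sum_list_mult_const)
  finally have "(1 - x^2) * (1 - hv a b x * poly (Vp gs) x) = (\<Sum>g\<leftarrow>gs. poly (fst g) x ^ 2)"
    by (simp add: algebra_simps)
  moreover have "(\<Sum>g\<leftarrow>gs. poly (fst g) x ^ 2) \<ge> 0" by (induct gs) auto
  ultimately show ?thesis by simp
qed

lemma core_contra:
  assumes rep: "sos_bounded a b TT M"
    and inj: "inj xs" and xs1: "\<forall>j. \<bar>xs j\<bar> < 1" and hpos: "\<forall>j\<le>2*M. hv a b (xs j) > 0"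
    and xst: "\<bar>xt\<bar> > 1"
    and small: "\<bar>hv a b xt\<bar> * (\<Sum>j\<le>2*M. \<bar>poly (lagr xs (2*M) j) xt\<bar> / hv a b (xs j)) < 1"
  shows False
proof -
  obtain gs where gs: "goodrep a b M gs" using rep sos_eval by blast
  let ?V = "poly (Vp gs)"
  have bnd: "?V (xs j) \<le> 1 / hv a b (xs j)" if "j \<le> 2*M" for j
  proof -
    have h: "hv a b (xs j) > 0" using hpos that by auto
    have "1 - (xs j)^2 > 0" using xs1[rule_format, of j] by (simp add: abs_square_less_1)
    moreover have "(1 - (xs j)^2) * (1 - hv a b (xs j) * ?V (xs j)) \<ge> 0" by (rule rep_ineq[OF gs])
    ultimately have "1 - hv a b (xs j) * ?V (xs j) \<ge> 0" by (simp add: zero_le_mult_iff)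
    then show ?thesis using h by (simp add: field_simps)
  qed
  have "?V xt = (\<Sum>j\<le>2*M. ?V (xs j) * poly (lagr xs (2*M) j) xt)"
    by (rule lagrange_eval) (use inj degree_Vp[OF gs] in \<open>auto simp: inj_on_def inj_def\<close>)
  also have "\<dots> \<le> (\<Sum>j\<le>2*M. \<bar>poly (lagr xs (2*M) j) xt\<bar> / hv a b (xs j))"
  proof (rule sum_mono)
    fix j assume j: "j \<in> {..2*M}"
    have "?V (xs j) * poly (lagr xs (2*M) j) xt \<le> ?V (xs j) * \<bar>poly (lagr xs (2*M) j) xt\<bar>"
      using Vp_nonneg by (intro mult_left_mono) auto
    also have "\<dots> \<le> (1 / hv a b (xs j)) * \<bar>poly (lagr xs (2*M) j) xt\<bar>"
      using bnd j by (intro mult_right_mono) auto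
    finally show "?V (xs j) * poly (lagr xs (2*M) j) xt \<le> \<bar>poly (lagr xs (2*M) j) xt\<bar> / hv a b (xs j)" by simp
  qed
  finally have Vle: "?V xt \<le> (\<Sum>j\<le>2*M. \<bar>poly (lagr xs (2*M) j) xt\<bar> / hv a b (xs j))" .
  have "hv a b xt * ?V xt \<le> \<bar>hv a b xt\<bar> * ?V xt" using Vp_nonneg by (intro mult_right_mono) auto
  also have "\<dots> \<le> \<bar>hv a b xt\<bar> * (\<Sum>j\<le>2*M. \<bar>poly (lagr xs (2*M) j) xt\<bar> / hv a b (xs j))"
    using Vle by (intro mult_left_mono) auto
  finally have "hv a b xt * ?V xt < 1" using small by linarith
  moreover have "1 - xt^2 < 0" 
  proof -
    have "1 < \<bar>xt\<bar> * \<bar>xt\<bar>" using xst by (metis less_1_mult)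
    then show ?thesis by (simp add: power2_eq_square)
  qed
  ultimately have "(1 - xt^2) * (1 - hv a b xt * ?V xt) < 0" by (simp add: mult_neg_pos)
  with rep_ineq[OF gs, of xt] show False by simp
qed


lemma partb_core:
  fixes s :: "nat \<Rightarrow> real \<times> real" and xs :: "nat \<Rightarrow> real"
  assumes lim: "s \<longlonglongrightarrow> (a0, b0)" and inj: "inj xs" and xs1: "\<forall>j. \<bar>xs j\<bar> < 1"
    and hpos0: "\<forall>j. hv a0 b0 (xs j) > 0" and x0abs: "\<bar>x0\<bar> \<ge> 1" and hx0: "hv a0 b0 x0 = 0"
  shows "eventually (\<lambda>\<nu>. \<not> sos_bounded (fst (s \<nu>)) (snd (s \<nu>)) TT M) sequentially"
proof -
  define D where "D = 2 * M"
  define \<Psi> where "\<Psi> x = \<bar>hv a0 b0 x\<bar> * (\<Sum>j\<le>D. \<bar>poly (lagr xs D j) x\<bar> / hv a0 b0 (xs j))" for x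
  have hne: "\<forall>j. (xs j)^2 + a0 * xs j + b0 \<noteq> 0" using hpos0 unfolding hv_def by (metis less_irrefl)
  have "isCont \<Psi> x0" unfolding \<Psi>_def hv_def using hne by (intro continuous_intros poly_isCont) auto
  then have "\<Psi> \<midarrow>x0\<rightarrow> \<Psi> x0" by (simp add: isCont_def)
  moreover have "\<Psi> x0 = 0" using hx0 by (simp add: \<Psi>_def)
  ultimately obtain d where d: "d > 0" "\<And>x. x \<noteq> x0 \<Longrightarrow> norm (x - x0) < d \<Longrightarrow> norm (\<Psi> x - 0) < 1/2"
    using LIM_D[where f=\<Psi> and a=x0 and L=0 and r="1/2"] by auto
  define xt where "xt = x0 + sgn x0 * d / 2"
  have xt1: "\<bar>xt\<bar> > 1" using x0abs d(1) by (auto simp: xt_def sgn_if abs_if)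
  have "norm (\<Psi> xt - 0) < 1/2" using d(1) x0abs by (intro d(2)) (auto simp: xt_def sgn_if)
  then have Pxt: "\<Psi> xt < 1" by simp
  have la: "(\<lambda>\<nu>. fst (s \<nu>)) \<longlonglongrightarrow> a0" using tendsto_fst[OF lim] by simp
  have lb: "(\<lambda>\<nu>. snd (s \<nu>)) \<longlonglongrightarrow> b0" using tendsto_snd[OF lim] by simp
  have lh: "(\<lambda>\<nu>. hv (fst (s \<nu>)) (snd (s \<nu>)) x) \<longlonglongrightarrow> hv a0 b0 x" for x
    unfolding hv_def by (intro tendsto_intros la lb)
  have "(\<lambda>\<nu>. \<bar>hv (fst (s \<nu>)) (snd (s \<nu>)) xt\<bar> * (\<Sum>j\<le>D. \<bar>poly (lagr xs D j) xt\<bar> / hv (fst (s \<nu>)) (snd (s \<nu>)) (xs j)))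
        \<longlonglongrightarrow> \<Psi> xt"
    unfolding \<Psi>_def hv_def using hne by (intro tendsto_intros la lb) auto
  then have ev1: "eventually (\<lambda>\<nu>. \<bar>hv (fst (s \<nu>)) (snd (s \<nu>)) xt\<bar> * (\<Sum>j\<le>D. \<bar>poly (lagr xs D j) xt\<bar> / hv (fst (s \<nu>)) (snd (s \<nu>)) (xs j)) < 1) sequentially"
    using Pxt by (rule order_tendstoD(2))
  have ev2: "eventually (\<lambda>\<nu>. \<forall>j\<in>{..D}. hv (fst (s \<nu>)) (snd (s \<nu>)) (xs j) > 0) sequentially"
    by (rule eventually_ball_finite) (use hpos0 in \<open>auto intro: order_tendstoD(1)[OF lh]\<close>)
  show ?thesis
    using eventually_conj[OF ev1 ev2]
  proof (rule eventually_mono)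
    fix \<nu> assume H: "\<bar>hv (fst (s \<nu>)) (snd (s \<nu>)) xt\<bar> * (\<Sum>j\<le>D. \<bar>poly (lagr xs D j) xt\<bar> / hv (fst (s \<nu>)) (snd (s \<nu>)) (xs j)) < 1 \<and> (\<forall>j\<in>{..D}. hv (fst (s \<nu>)) (snd (s \<nu>)) (xs j) > 0)"
    show "\<not> sos_bounded (fst (s \<nu>)) (snd (s \<nu>)) TT M"
    proof
      assume "sos_bounded (fst (s \<nu>)) (snd (s \<nu>)) TT M"
      then show False
        by (rule core_contra[OF _ inj xs1 _ xt1]) (use H in \<open>auto simp: D_def\<close>)
    qed
  qed
qed


definition goodpts :: "real \<Rightarrow> real \<Rightarrow> bool" where
  "goodpts a b \<longleftrightarrow> (\<exists>(xs::nat \<Rightarrow> real) (x0::real). inj xs \<and> (\<forall>j. \<bar>xs j\<bar> < 1 \<and> hv a b (xs j) > 0) \<and> \<bar>x0\<bar> \<ge> 1 \<and> hv a b x0 = 0)"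

lemma inj1: "c \<noteq> 0 \<Longrightarrow> inj (\<lambda>j::nat. d + c / (real j + 2))"
  by (auto simp: inj_def field_simps)

lemma pts1:
  assumes c1: "a^2 = 4*b" "4*b \<ge> 4"
  shows "goodpts a b"
proof -
  have hh: "hv a b x = (x + a/2)^2" for x using c1 by (simp add: hv_def power2_eq_square field_simps)
  have "a^2 \<ge> 2^2" using c1 by simp
  then have aa: "\<bar>a\<bar> \<ge> 2" using abs_le_square_iff by (metis abs_numeral)
  let ?xs = "\<lambda>j::nat. 0 + 1 / (real j + 2)"
  have "\<bar>?xs j\<bar> < 1 \<and> hv a b (?xs j) > 0" for j
  proof -
    have le: "0 < ?xs j" "?xs j \<le> 1/2" by (auto simp: field_simps)
    have "a \<ge> 2 \<or> a \<le> -2" using aa by linarith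
    then have "?xs j + a/2 \<noteq> 0" using le by linarith
    then show ?thesis using le unfolding hh by simp
  qed
  moreover have "hv a b (-a/2) = 0" by (simp add: hh)
  moreover have "\<bar>-a/2\<bar> \<ge> 1" using aa by simp
  moreover have "inj ?xs" using inj1[of 1 0] by simp
  ultimately show ?thesis unfolding goodpts_def by blast
qed


lemma pts2:
  assumes c2: "a = b + 1" "b > -1" "b \<le> 1"
  shows "goodpts a b"
proof -
  have hh: "hv a b x = (x + 1) * (x + b)" for x unfolding hv_def c2(1) by (simp add: algebra_simps power2_eq_square)
  let ?xs = "\<lambda>j::nat. 1 - (1 + b) / (real j + 2)"
  have "\<bar>?xs j\<bar> < 1 \<and> hv a b (?xs j) > 0" for j
  proof -
    define t where "t = (1 + b) / (real j + 2)"
    have t0: "0 < t" unfolding t_def using c2 by simp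
    have "t \<le> (1 + b) / 2" unfolding t_def using c2 by (intro divide_left_mono) auto
    then have t1: "2 * t \<le> 1 + b" by simp
    have xe: "?xs j = 1 - t" unfolding t_def by simp
    have "?xs j + 1 > 0" "?xs j + b > 0" "?xs j < 1" "?xs j > -1" unfolding xe using t0 t1 c2 by auto
    then show ?thesis unfolding hh by (simp add: abs_less_iff)
  qed
  moreover have "inj ?xs"
  proof (rule injI)
    fix i j assume "?xs i = ?xs j"
    then have "(1 + b) / (real i + 2) = (1 + b) / (real j + 2)" by simp
    then have "real i + 2 = real j + 2" using c2 by (simp add: divide_cancel_left)
    then show "i = j" by simp
  qed
  moreover have "hv a b (-1) = 0" by (simp add: hh)
  ultimately show ?thesis unfolding goodpts_def by (metis abs_minus_cancel abs_one order_refl)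
qed

lemma pts3:
  assumes c3: "a = -(b + 1)" "b > -1" "b \<le> 1"
  shows "goodpts a b"
proof -
  have hh: "hv a b x = (x - 1) * (x - b)" for x unfolding hv_def c3(1) by (simp add: algebra_simps power2_eq_square)
  let ?xs = "\<lambda>j::nat. -1 + (1 + b) / (real j + 2)"
  have "\<bar>?xs j\<bar> < 1 \<and> hv a b (?xs j) > 0" for j
  proof -
    define t where "t = (1 + b) / (real j + 2)"
    have t0: "0 < t" unfolding t_def using c3 by simp
    have "t \<le> (1 + b) / 2" unfolding t_def using c3 by (intro divide_left_mono) auto
    then have t1: "2 * t \<le> 1 + b" by simp
    have xe: "?xs j = -1 + t" unfolding t_def by simp
    have "?xs j - 1 < 0" "?xs j - b < 0" "?xs j < 1" "?xs j > -1" unfolding xe using t0 t1 c3 by auto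
    then show ?thesis unfolding hh by (simp add: abs_less_iff mult_neg_neg)
  qed
  moreover have "inj ?xs" using inj1[of "1 + b" "-1"] c3 by simp
  moreover have "hv a b 1 = 0" by (simp add: hh)
  ultimately show ?thesis unfolding goodpts_def by (metis abs_one order_refl)
qed


lemma P'_points:
  assumes "p \<in> P'set - {(0, -1)}"
  shows "goodpts (fst p) (snd p)"
proof -
  obtain a b where p: "p = (a, b)" by fastforce
  have m: "(a, b) \<in> P'set" "(a, b) \<noteq> (0, -1)" using assms p by auto
  show ?thesis
  proof (cases "a^2 = 4*b \<and> 4*b \<ge> 4")
    case True
    then show ?thesis using pts1 p by auto
  next
    case False
    then have ab: "\<bar>a\<bar> = b + 1" "b + 1 \<le> 2" using m(1) unfolding P'set_def by auto
    have bne: "b \<noteq> -1" using ab m(2) by auto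
    have bg: "b > -1" "b \<le> 1" using ab bne by linarith+
    have "a = b + 1 \<or> a = -(b + 1)" using ab(1) by linarith
    then show ?thesis using pts2[OF _ bg] pts3[OF _ bg] p by auto
  qed
qed

lemma partb:
  assumes "\<forall>\<nu>. s \<nu> \<in> Pset" "s \<longlonglongrightarrow> p" "p \<in> P'set - {(0, -1)}"
  shows "eventually (\<lambda>\<nu>. enat M < Nfun (s \<nu>)) sequentially"
proof -
  obtain xs :: "nat \<Rightarrow> real" and x0 :: real where X: "inj xs" "\<forall>j. \<bar>xs j\<bar> < 1 \<and> hv (fst p) (snd p) (xs j) > 0" "\<bar>x0\<bar> \<ge> 1" "hv (fst p) (snd p) x0 = 0"
    using P'_points[OF assms(3)] unfolding goodpts_def by blast
  have "s \<longlonglongrightarrow> (fst p, snd p)" using assms(2) by simp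
  from partb_core[OF this X(1) _ _ X(3,4), of M] X(2)
  have "eventually (\<lambda>\<nu>. \<not> sos_bounded (fst (s \<nu>)) (snd (s \<nu>)) TT M) sequentially" by blast
  then show ?thesis by (rule eventually_mono) (simp add: Nfun_le[symmetric] not_le)
qed


definition qf :: "nat \<Rightarrow> (nat \<Rightarrow> nat \<Rightarrow> real) \<Rightarrow> (nat \<Rightarrow> real) \<Rightarrow> real" where
  "qf m G y = (\<Sum>s<m. \<Sum>t<m. G s t * y s * y t)"

lemma qf_cong: "(\<And>s. s < m \<Longrightarrow> y s = z s) \<Longrightarrow> qf m G y = qf m G z"
  unfolding qf_def by (intro sum.cong refl) auto

lemma qexp:
  assumes sym: "\<And>s. s < m \<Longrightarrow> G s m = G m s"
  shows "qf (Suc m) G y = qf m G y + 2 * y m * (\<Sum>t<m. G m t * y t) + G m m * (y m)^2"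
proof -
  have "qf (Suc m) G y = (\<Sum>s<m. (\<Sum>t<m. G s t * y s * y t) + G s m * y s * y m) + ((\<Sum>t<m. G m t * y m * y t) + G m m * y m * y m)"
    unfolding qf_def by simp
  also have "\<dots> = qf m G y + (\<Sum>s<m. G s m * y s * y m) + (\<Sum>t<m. G m t * y m * y t) + G m m * y m * y m"
    unfolding qf_def by (simp add: sum.distrib)
  also have "(\<Sum>s<m. G s m * y s * y m) = y m * (\<Sum>t<m. G m t * y t)"
    by (simp add: sum_distrib_left sym mult_ac)
  also have "(\<Sum>t<m. G m t * y m * y t) = y m * (\<Sum>t<m. G m t * y t)"
    by (simp add: sum_distrib_left mult_ac)
  finally show ?thesis by (simp add: power2_eq_square)
qed

lemma psd_factor:
  "(\<forall>s<m. \<forall>t<m. G s t = G t s) \<Longrightarrow> (\<forall>y. 0 \<le> qf m G y) \<Longrightarrow>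
   \<exists>d. \<forall>s<m. \<forall>t<m. G s t = (\<Sum>j<m. d j s * d j t)"
proof (induction m arbitrary: G)
  case 0
  then show ?case by simp
next
  case (Suc m)
  have sym: "\<And>s. s < m \<Longrightarrow> G s m = G m s" using Suc.prems(1) by auto
  define c where "c = G m m"
  have c0: "c \<ge> 0"
  proof -
    have "0 \<le> qf (Suc m) G (\<lambda>s. if s = m then 1 else 0)" using Suc.prems(2) by blast
    also have "\<dots> = c" unfolding qexp[where m=m and G=G, OF sym] c_def qf_def by simp
    finally show ?thesis .
  qed
  show ?case
  proof (cases "c = 0")
    case True
    have row0: "G m t = 0" if t: "t < m" for t
    proof (rule ccontr)
      assume ne: "G m t \<noteq> 0"
      define lam where "lam = - (G t t + 1) / (2 * G m t)"
      define y where "y = (\<lambda>s. if s = m then lam else if s = t then 1 else (0::real))"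
      have "0 \<le> qf (Suc m) G y" using Suc.prems(2) by blast
      also have "\<dots> = qf m G y + 2 * y m * (\<Sum>t<m. G m t * y t) + G m m * (y m)^2"
        by (rule qexp) (rule sym)
      also have "(\<Sum>t'<m. G m t' * y t') = G m t"
        using t by (simp add: y_def if_distrib sum.If_cases)
      also have "y m = lam" by (simp add: y_def)
      also have "G m m = 0" using True c_def by simp
      also have "qf m G y = G t t"
      proof -
        have "qf m G y = (\<Sum>s<m. \<Sum>t'<m. if s = t \<and> t' = t then G s t' else 0)"
          unfolding qf_def by (intro sum.cong refl) (auto simp: y_def)
        also have "\<dots> = (\<Sum>s<m. if s = t then G s t else 0)"
          using t by (intro sum.cong refl) (auto)
        also have "\<dots> = G t t" using t by simp
        finally show ?thesis .
      qed
      also have "G t t + 2 * lam * G m t = -1" using ne by (simp add: lam_def field_simps)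
      finally show False by (simp add: mult.assoc)
    qed
    have "\<exists>d. \<forall>s<m. \<forall>t<m. G s t = (\<Sum>j<m. d j s * d j t)"
    proof (rule Suc.IH)
      show "\<forall>s<m. \<forall>t<m. G s t = G t s" using Suc.prems(1) by auto
      show "\<forall>y. 0 \<le> qf m G y"
      proof
        fix y
        have "0 \<le> qf (Suc m) G (y(m := 0))" using Suc.prems(2) by blast
        also have "\<dots> = qf m G (y(m := 0))" by (simp add: qexp[where m=m and G=G, OF sym])
        also have "\<dots> = qf m G y" by (rule qf_cong) auto
        finally show "0 \<le> qf m G y" .
      qed
    qed
    then obtain d' where d': "\<forall>s<m. \<forall>t<m. G s t = (\<Sum>j<m. d' j s * d' j t)" by blast
    define d where "d = (\<lambda>j s. if j < m \<and> s < m then d' j s else (0::real))"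
    have "\<forall>s<Suc m. \<forall>t<Suc m. G s t = (\<Sum>j<Suc m. d j s * d j t)"
    proof (intro allI impI)
      fix s t assume s: "s < Suc m" and t: "t < Suc m"
      show "G s t = (\<Sum>j<Suc m. d j s * d j t)"
      proof (cases "s < m \<and> t < m")
        case True
        then show ?thesis using d' by (simp add: d_def)
      next
        case False
        then have "s = m \<or> t = m" using s t by auto
        then have "G s t = 0" using row0 sym True s t c_def
          by (metis less_Suc_eq)
        moreover have "(\<Sum>j<Suc m. d j s * d j t) = 0"
        proof (cases "s < m")
          case True
          then have "\<not> t < m" using False by auto
          then show ?thesis by (simp add: d_def)
        next
          case False
          then show ?thesis by (simp add: d_def)
        qed
        ultimately show ?thesis by simp
      qed
    qed
    then show ?thesis by blast
  next
    case False
    then have cpos: "c > 0" using c0 by simp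
    define G' where "G' = (\<lambda>s t. G s t - G m s * G m t / c)"
    have "\<exists>d. \<forall>s<m. \<forall>t<m. G' s t = (\<Sum>j<m. d j s * d j t)"
    proof (rule Suc.IH)
      show "\<forall>s<m. \<forall>t<m. G' s t = G' t s" using Suc.prems(1) by (auto simp: G'_def)
      show "\<forall>y. 0 \<le> qf m G' y"
      proof
        fix y
        define L where "L = (\<Sum>t<m. G m t * y t)"
        have A: "0 \<le> qf (Suc m) G (y(m := - L / c))" using Suc.prems(2) by blast
        have B: "qf (Suc m) G (y(m := - L / c)) = qf m G (y(m := - L / c)) + 2 * (y(m := - L / c)) m * (\<Sum>t<m. G m t * (y(m := - L / c)) t) + G m m * ((y(m := - L / c)) m)^2"
          by (rule qexp) (rule sym)
        have C: "(\<Sum>t<m. G m t * (y(m := - L / c)) t) = L" unfolding L_def by (intro sum.cong) auto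
        have D: "qf m G (y(m := - L / c)) = qf m G y" by (rule qf_cong) auto
        have E: "2 * (- L / c) * L + c * (- L / c)^2 = - (L * L / c)"
          using cpos by (simp add: field_simps power2_eq_square)
        have F: "qf m G y + - (L * L / c) = qf m G' y"
        proof -
          have "qf m G' y = qf m G y - (\<Sum>s<m. \<Sum>t<m. (G m s * y s) * (G m t * y t) / c)"
            unfolding qf_def G'_def by (simp add: sum_subtractf algebra_simps)
          also have "(\<Sum>s<m. \<Sum>t<m. (G m s * y s) * (G m t * y t) / c) = L * L / c"
            unfolding L_def by (simp add: sum_divide_distrib[symmetric] sum_product)
          finally show ?thesis by simp
        qed
        have "qf (Suc m) G (y(m := - L / c)) = qf m G' y"
          using B C D E F by (simp add: c_def)
        then show "0 \<le> qf m G' y" using A by simp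
      qed
    qed
    then obtain d' where d': "\<forall>s<m. \<forall>t<m. G' s t = (\<Sum>j<m. d' j s * d' j t)" by blast
    define d where "d = (\<lambda>j s. if j < m then (if s < m then d' j s else 0) else G m s / sqrt c)"
    have sq: "sqrt c * sqrt c = c" using cpos by simp
    have "\<forall>s<Suc m. \<forall>t<Suc m. G s t = (\<Sum>j<Suc m. d j s * d j t)"
    proof (intro allI impI)
      fix s t assume s: "s < Suc m" and t: "t < Suc m"
      have e: "(\<Sum>j<Suc m. d j s * d j t) = (\<Sum>j<m. d j s * d j t) + G m s * G m t / c"
        using sq by (simp add: d_def field_simps)
      show "G s t = (\<Sum>j<Suc m. d j s * d j t)"
      proof (cases "s < m \<and> t < m")
        case True
        then have "(\<Sum>j<m. d j s * d j t) = G' s t" using d' by (simp add: d_def)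
        then show ?thesis unfolding e using True by (simp add: G'_def)
      next
        case False
        then have "(\<Sum>j<m. d j s * d j t) = 0" by (auto simp: d_def)
        moreover have "G s t = G m s * G m t / c"
        proof -
          have "s = m \<or> t = m" using s t False by auto
          then show ?thesis using sym s t cpos unfolding c_def
            by (auto simp: less_Suc_eq)
        qed
        ultimately show ?thesis unfolding e by simp
      qed
    qed
    then show ?thesis by blast
  qed
qed


lemma subseq_finite:
  fixes f :: "'i \<Rightarrow> nat \<Rightarrow> real"
  assumes "finite I" "\<forall>i\<in>I. bounded (range (f i))"
  shows "\<exists>r l. strict_mono r \<and> (\<forall>i\<in>I. (\<lambda>k. f i (r k)) \<longlonglongrightarrow> l i)"
  using assms
proof (induction I rule: finite_induct)
  case empty
  show ?case by (rule exI[of _ id]) (auto simp: strict_mono_def)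
next
  case (insert i I)
  then obtain r l where r: "strict_mono r" "\<forall>i\<in>I. (\<lambda>k. f i (r k)) \<longlonglongrightarrow> l i" by auto
  have "bounded (range (\<lambda>k. f i (r k)))"
    by (rule bounded_subset[of "range (f i)"]) (use insert.prems in auto)
  then obtain li r2 where r2: "strict_mono r2" "((\<lambda>k. f i (r k)) \<circ> r2) \<longlonglongrightarrow> li"
    using bounded_imp_convergent_subsequence by blast
  define l' where "l' = l(i := li)"
  have "strict_mono (r \<circ> r2)" using r(1) r2(1) by (rule strict_mono_o)
  moreover have "\<forall>j\<in>insert i I. (\<lambda>k. f j ((r \<circ> r2) k)) \<longlonglongrightarrow> l' j"
  proof
    fix j assume j: "j \<in> insert i I"
    show "(\<lambda>k. f j ((r \<circ> r2) k)) \<longlonglongrightarrow> l' j"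
    proof (cases "j = i")
      case True
      then show ?thesis using r2(2) by (simp add: l'_def o_def)
    next
      case False
      then have "j \<in> I" using j by auto
      then have "((\<lambda>k. f j (r k)) \<circ> r2) \<longlonglongrightarrow> l j" using r(2) r2(1) by (intro LIMSEQ_subseq_LIMSEQ) auto
      then show ?thesis using False by (simp add: l'_def o_def)
    qed
  qed
  ultimately show ?case by blast
qed

lemma gram_sum:
  fixes c :: "'g \<Rightarrow> nat \<Rightarrow> real"
  shows "(\<Sum>g\<leftarrow>gs. (\<Sum>s<m. c g s * U s) * (\<Sum>t<m. c g t * V t)) =
         (\<Sum>s<m. \<Sum>t<m. (\<Sum>g\<leftarrow>gs. c g s * c g t) * U s * V t)"
proof (induction gs)
  case Nil
  then show ?case by simp
next
  case (Cons g gs)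
  have "(\<Sum>s<m. c g s * U s) * (\<Sum>t<m. c g t * V t) = (\<Sum>s<m. \<Sum>t<m. (c g s * c g t) * U s * V t)"
    by (simp add: sum_product mult_ac)
  then show ?case using Cons by (simp add: sum.distrib[symmetric] algebra_simps)
qed

lemma abs_sum_list_prod: "\<bar>\<Sum>g\<leftarrow>gs. f g * h g\<bar> \<le> ((\<Sum>g\<leftarrow>gs. (f g)^2) + (\<Sum>g\<leftarrow>gs. (h g)^2)) / (2::real)"
proof (induction gs)
  case Nil
  then show ?case by simp
next
  case (Cons g gs)
  have e: "(\<bar>f g\<bar> - \<bar>h g\<bar>)^2 = (f g)^2 + (h g)^2 - 2 * \<bar>f g * h g\<bar>"
    by (simp add: power2_diff abs_mult)
  have "0 \<le> (\<bar>f g\<bar> - \<bar>h g\<bar>)^2" by simp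
  then have "2 * \<bar>f g * h g\<bar> \<le> (f g)^2 + (h g)^2" unfolding e by simp
  then show ?case using Cons abs_triangle_ineq[of "f g * h g" "(\<Sum>g\<leftarrow>gs. f g * h g)"] by simp
qed


definition mm :: "nat \<Rightarrow> nat" where "mm n = Suc n + (if 2 \<le> n then n - 1 else 0)"
definition bU :: "(nat \<Rightarrow> real) \<Rightarrow> nat \<Rightarrow> nat \<Rightarrow> real poly" where
  "bU xs n s = (if s \<le> n then lagr xs n s else 0)"
definition bV :: "(nat \<Rightarrow> real) \<Rightarrow> nat \<Rightarrow> nat \<Rightarrow> real poly" where
  "bV xs n s = (if s \<le> n then 0 else lagr xs (n - 2) (s - Suc n))"
definition cf :: "(nat \<Rightarrow> real) \<Rightarrow> nat \<Rightarrow> real poly \<times> real poly \<Rightarrow> nat \<Rightarrow> real" where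
  "cf xs n g s = (if s \<le> n then poly (fst g) (xs s) else poly (snd g) (xs (s - Suc n)))"

lemma mm_ge: "Suc n \<le> mm n" by (simp add: mm_def)

lemma inj_sub: "inj xs \<Longrightarrow> inj_on xs A"
  by (meson inj_on_subset subset_UNIV)

lemma decomp_fst:
  assumes "inj xs" "delta g \<le> n"
  shows "fst g = (\<Sum>s<mm n. smult (cf xs n g s) (bU xs n s))"
proof -
  have "(\<Sum>s<mm n. smult (cf xs n g s) (bU xs n s)) = (\<Sum>s\<le>n. smult (cf xs n g s) (bU xs n s))"
    using mm_ge[of n] by (intro sum.mono_neutral_right) (auto simp: bU_def)
  also have "\<dots> = (\<Sum>s\<le>n. smult (poly (fst g) (xs s)) (lagr xs n s))"
    by (intro sum.cong refl) (auto simp: bU_def cf_def)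
  also have "\<dots> = fst g"
    using lagrange[OF inj_sub[OF assms(1)] delta_fst[OF assms(2)]] by simp
  finally show ?thesis by simp
qed

lemma decomp_snd:
  assumes "inj xs" "delta g \<le> n"
  shows "snd g = (\<Sum>s<mm n. smult (cf xs n g s) (bV xs n s))"
proof (cases "2 \<le> n")
  case False
  then have "snd g = 0" using assms(2) unfolding delta_def by (auto split: if_splits)
  moreover have "(\<Sum>s<mm n. smult (cf xs n g s) (bV xs n s)) = 0"
    using False by (intro sum.neutral) (auto simp: mm_def bV_def)
  ultimately show ?thesis by simp
next
  case True
  have dg: "degree (snd g) \<le> n - 2"
    using assms(2) unfolding delta_def by (auto split: if_splits)
  have m2: "mm n = (n - 1) + Suc n" using True by (simp add: mm_def)
  have "(\<Sum>s<mm n. smult (cf xs n g s) (bV xs n s)) = (\<Sum>s\<in>{Suc n..<mm n}. smult (cf xs n g s) (bV xs n s))"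
    by (intro sum.mono_neutral_right) (auto simp: bV_def)
  also have "\<dots> = (\<Sum>s\<in>{0 + Suc n..<(n - 1) + Suc n}. smult (cf xs n g s) (bV xs n s))"
    by (simp add: m2)
  also have "\<dots> = (\<Sum>j\<in>{0..<n - 1}. smult (cf xs n g (j + Suc n)) (bV xs n (j + Suc n)))"
    by (rule sum.shift_bounds_nat_ivl)
  also have "\<dots> = (\<Sum>j\<le>n - 2. smult (poly (snd g) (xs j)) (lagr xs (n - 2) j))"
  proof -
    have "{0..<n - 1} = {..n - 2}" using True by auto
    then show ?thesis by (simp add: cf_def bV_def)
  qed
  also have "\<dots> = snd g"
    using lagrange[OF inj_sub[OF assms(1)] dg] by simp
  finally show ?thesis by simp
qed

lemma delta_recon:
  "delta (\<Sum>s<mm n. smult (c s) (bU xs n s), \<Sum>s<mm n. smult (c s) (bV xs n s)) \<le> n"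
proof -
  have d1: "degree (\<Sum>s<mm n. smult (c s) (bU xs n s)) \<le> n"
    by (intro degree_sum_le) (auto simp: bU_def intro: order_trans[OF degree_smult_le] degree_lagr)
  show ?thesis
  proof (cases "2 \<le> n")
    case False
    have "(\<Sum>s<mm n. smult (c s) (bV xs n s)) = 0"
      using False by (intro sum.neutral) (auto simp: mm_def bV_def)
    then show ?thesis using d1 by (simp add: delta_def)
  next
    case True
    have "degree (\<Sum>s<mm n. smult (c s) (bV xs n s)) \<le> n - 2"
    proof (intro degree_sum_le)
      fix s assume "s \<in> {..<mm n}"
      then have s: "s < n - 1 + Suc n" using True by (simp add: mm_def)
      show "degree (smult (c s) (bV xs n s)) \<le> n - 2"
      proof (cases "s \<le> n")
        case True then show ?thesis by (simp add: bV_def)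
      next
        case False
        then have "s - Suc n \<le> n - 2" using s by linarith
        then show ?thesis using False by (auto simp: bV_def intro: order_trans[OF degree_smult_le] degree_lagr)
      qed
    qed auto
    then have "Suc (Suc (degree (\<Sum>s<mm n. smult (c s) (bV xs n s)))) \<le> n" using True by linarith
    then show ?thesis using d1 True by (simp add: delta_def)
  qed
qed

lemma eval_fst: "inj xs \<Longrightarrow> delta g \<le> n \<Longrightarrow> poly (fst g) x = (\<Sum>s<mm n. cf xs n g s * poly (bU xs n s) x)"
  by (subst decomp_fst, assumption+) (simp add: poly_sum)

lemma eval_snd: "inj xs \<Longrightarrow> delta g \<le> n \<Longrightarrow> poly (snd g) x = (\<Sum>s<mm n. cf xs n g s * poly (bV xs n s) x)"
  by (subst decomp_snd, assumption+) (simp add: poly_sum)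


definition Gr :: "(nat \<Rightarrow> real) \<Rightarrow> nat \<Rightarrow> (real poly \<times> real poly) list \<Rightarrow> nat \<Rightarrow> nat \<Rightarrow> real" where
  "Gr xs n gs s t = (\<Sum>g\<leftarrow>gs. cf xs n g s * cf xs n g t)"

definition Qf :: "(nat \<Rightarrow> real) \<Rightarrow> nat \<Rightarrow> (nat \<Rightarrow> nat \<Rightarrow> real) \<Rightarrow> real \<Rightarrow> real \<Rightarrow> real \<Rightarrow> real" where
  "Qf xs n G a b x = (\<Sum>s<mm n. \<Sum>t<mm n. G s t * (poly (bU xs n s) x * poly (bU xs n t) x
        - poly (bV xs n s) x * poly (bV xs n t) x * ((x^2 - 1) * hv a b x)))"

definition Qg :: "(nat \<Rightarrow> real) \<Rightarrow> nat \<Rightarrow> (nat \<Rightarrow> nat \<Rightarrow> real) \<Rightarrow> real \<Rightarrow> real" where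
  "Qg xs n G x = (\<Sum>s<mm n. \<Sum>t<mm n. G s t * (poly (bU xs n s) x * poly (bV xs n t) x))"

lemma ss_lin: "(\<Sum>s\<in>A. \<Sum>t\<in>B. G s t * (P s t - Q s t * (c::real))) = (\<Sum>s\<in>A. \<Sum>t\<in>B. G s t * P s t) - (\<Sum>s\<in>A. \<Sum>t\<in>B. G s t * Q s t) * c"
  by (simp add: sum_subtractf sum_distrib_right right_diff_distrib mult.assoc)

lemma Qf_split: "Qf xs n G a b x = (\<Sum>s<mm n. \<Sum>t<mm n. G s t * poly (bU xs n s) x * poly (bU xs n t) x)
     - (\<Sum>s<mm n. \<Sum>t<mm n. G s t * poly (bV xs n s) x * poly (bV xs n t) x) * ((x^2 - 1) * hv a b x)"
  unfolding Qf_def ss_lin by (simp only: mult.assoc)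

lemma sum_list_cong': "(\<And>g. g \<in> set gs \<Longrightarrow> f g = h g) \<Longrightarrow> (\<Sum>g\<leftarrow>gs. f g) = (\<Sum>g\<leftarrow>gs. h g)"
  by (metis map_cong)

lemma rep_to_gram:
  assumes inj: "inj xs" and rep: "goodrep a b n gs"
  shows "1 - x^2 = Qf xs n (Gr xs n gs) a b x" "Qg xs n (Gr xs n gs) x = 0"
    "0 \<le> qf (mm n) (Gr xs n gs) y"
proof -
  have dl: "\<And>g. g \<in> set gs \<Longrightarrow> delta g \<le> n" using rep unfolding goodrep_def by blast
  let ?U = "\<lambda>s. poly (bU xs n s) x" and ?V = "\<lambda>s. poly (bV xs n s) x"
  have uu: "(\<Sum>g\<leftarrow>gs. poly (fst g) x * poly (fst g) x) = (\<Sum>s<mm n. \<Sum>t<mm n. Gr xs n gs s t * ?U s * ?U t)"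
  proof -
    have "(\<Sum>g\<leftarrow>gs. poly (fst g) x * poly (fst g) x) = (\<Sum>g\<leftarrow>gs. (\<Sum>s<mm n. cf xs n g s * ?U s) * (\<Sum>t<mm n. cf xs n g t * ?U t))"
      by (rule sum_list_cong') (simp add: eval_fst[OF inj dl])
    then show ?thesis by (simp add: gram_sum Gr_def)
  qed
  have vv: "(\<Sum>g\<leftarrow>gs. poly (snd g) x * poly (snd g) x) = (\<Sum>s<mm n. \<Sum>t<mm n. Gr xs n gs s t * ?V s * ?V t)"
  proof -
    have "(\<Sum>g\<leftarrow>gs. poly (snd g) x * poly (snd g) x) = (\<Sum>g\<leftarrow>gs. (\<Sum>s<mm n. cf xs n g s * ?V s) * (\<Sum>t<mm n. cf xs n g t * ?V t))"
      by (rule sum_list_cong') (simp add: eval_snd[OF inj dl])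
    then show ?thesis by (simp add: gram_sum Gr_def)
  qed
  have uv: "(\<Sum>g\<leftarrow>gs. poly (fst g) x * poly (snd g) x) = (\<Sum>s<mm n. \<Sum>t<mm n. Gr xs n gs s t * ?U s * ?V t)"
  proof -
    have "(\<Sum>g\<leftarrow>gs. poly (fst g) x * poly (snd g) x) = (\<Sum>g\<leftarrow>gs. (\<Sum>s<mm n. cf xs n g s * ?U s) * (\<Sum>t<mm n. cf xs n g t * ?V t))"
      by (rule sum_list_cong') (simp add: eval_fst[OF inj dl] eval_snd[OF inj dl])
    then show ?thesis by (simp add: gram_sum Gr_def)
  qed
  have "1 - x^2 = (\<Sum>g\<leftarrow>gs. poly (fst g) x ^ 2 - poly (snd g) x ^ 2 * ((x^2 - 1) * hv a b x))"
    using rep unfolding goodrep_def by blast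
  also have "\<dots> = (\<Sum>g\<leftarrow>gs. poly (fst g) x * poly (fst g) x) - (\<Sum>g\<leftarrow>gs. poly (snd g) x * poly (snd g) x) * ((x^2 - 1) * hv a b x)"
    by (simp add: sum_list_subtractf sum_list_mult_const power2_eq_square)
  also have "\<dots> = Qf xs n (Gr xs n gs) a b x" unfolding Qf_split uu vv ..
  finally show "1 - x^2 = Qf xs n (Gr xs n gs) a b x" .
  have "Qg xs n (Gr xs n gs) x = (\<Sum>g\<leftarrow>gs. poly (fst g) x * poly (snd g) x)"
    unfolding uv Qg_def by (simp add: mult.assoc)
  also have "\<dots> = 0" using rep unfolding goodrep_def by blast
  finally show "Qg xs n (Gr xs n gs) x = 0" .
  have "qf (mm n) (Gr xs n gs) y = (\<Sum>g\<leftarrow>gs. (\<Sum>s<mm n. cf xs n g s * y s) * (\<Sum>t<mm n. cf xs n g t * y t))"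
    unfolding qf_def Gr_def by (simp add: gram_sum)
  also have "\<dots> \<ge> 0" by (induct gs) (auto simp: mult_nonneg_nonneg)
  finally show "0 \<le> qf (mm n) (Gr xs n gs) y" .
qed

lemma gram_to_rep:
  assumes inj: "inj xs" and sym: "\<forall>s<mm n. \<forall>t<mm n. G s t = G t s" and psd: "\<forall>y. 0 \<le> qf (mm n) G y"
    and id1: "\<forall>x. 1 - x^2 = Qf xs n G a b x" and id2: "\<forall>x. Qg xs n G x = 0"
  shows "sos_bounded a b TT n"
proof -
  obtain d where d: "\<forall>s<mm n. \<forall>t<mm n. G s t = (\<Sum>j<mm n. d j s * d j t)"
    using psd_factor[OF sym psd] by blast
  define e where "e = (\<lambda>j. (\<Sum>s<mm n. smult (d j s) (bU xs n s), \<Sum>s<mm n. smult (d j s) (bV xs n s)))"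
  define gs where "gs = map e [0..<mm n]"
  have G': "G s t = (\<Sum>j\<leftarrow>[0..<mm n]. d j s * d j t)" if "s < mm n" "t < mm n" for s t
    using d that by (simp add: sum_list_distinct_conv_sum_set atLeast0LessThan)
  let ?U = "\<lambda>s x. poly (bU xs n s) x" and ?V = "\<lambda>s x. poly (bV xs n s) x"
  have pe1: "poly (fst (e j)) x = (\<Sum>s<mm n. d j s * ?U s x)" for j x by (simp add: e_def poly_sum)
  have pe2: "poly (snd (e j)) x = (\<Sum>s<mm n. d j s * ?V s x)" for j x by (simp add: e_def poly_sum)
  have gsum: "(\<Sum>g\<leftarrow>gs. f g) = (\<Sum>j\<leftarrow>[0..<mm n]. f (e j))" for f :: "_ \<Rightarrow> real"
    by (simp add: gs_def o_def)
  have ssG: "(\<Sum>s<mm n. \<Sum>t<mm n. (\<Sum>j\<leftarrow>[0..<mm n]. d j s * d j t) * A s * B t) = (\<Sum>s<mm n. \<Sum>t<mm n. G s t * A s * B t)" for A B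
    by (intro sum.cong refl) (simp add: G')
  have "goodrep a b n gs"
    unfolding goodrep_def
  proof (intro conjI allI ballI)
    fix g assume "g \<in> set gs"
    then show "delta g \<le> n" unfolding gs_def e_def using delta_recon by auto
  next
    fix x
    have "(\<Sum>g\<leftarrow>gs. poly (fst g) x ^ 2 - poly (snd g) x ^ 2 * ((x^2 - 1) * hv a b x))
       = (\<Sum>j\<leftarrow>[0..<mm n]. (\<Sum>s<mm n. d j s * ?U s x) * (\<Sum>t<mm n. d j t * ?U t x))
         - (\<Sum>j\<leftarrow>[0..<mm n]. (\<Sum>s<mm n. d j s * ?V s x) * (\<Sum>t<mm n. d j t * ?V t x)) * ((x^2 - 1) * hv a b x)"
      by (simp add: gsum pe1 pe2 sum_list_subtractf sum_list_mult_const power2_eq_square)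
    also have "\<dots> = Qf xs n G a b x"
      unfolding Qf_split gram_sum ssG ..
    finally show "1 - x^2 = (\<Sum>g\<leftarrow>gs. poly (fst g) x ^ 2 - poly (snd g) x ^ 2 * ((x^2 - 1) * hv a b x))"
      using id1 by simp
  next
    fix x
    have "(\<Sum>g\<leftarrow>gs. poly (fst g) x * poly (snd g) x)
       = (\<Sum>j\<leftarrow>[0..<mm n]. (\<Sum>s<mm n. d j s * ?U s x) * (\<Sum>t<mm n. d j t * ?V t x))"
      by (simp add: gsum pe1 pe2)
    also have "\<dots> = Qg xs n G x"
      unfolding Qg_def gram_sum ssG by (simp add: mult.assoc)
    finally show "(\<Sum>g\<leftarrow>gs. poly (fst g) x * poly (snd g) x) = 0" using id2 by simp
  qed
  then show ?thesis using sos_eval by blast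
qed


lemma rep_UV:
  assumes "goodrep a b e gs"
  shows "(\<Sum>g\<leftarrow>gs. poly (fst g) x ^ 2) = (1 - x^2) * (1 - hv a b x * (\<Sum>g\<leftarrow>gs. poly (snd g) x ^ 2))"
proof -
  have "1 - x^2 = (\<Sum>g\<leftarrow>gs. poly (fst g) x ^ 2 - poly (snd g) x ^ 2 * ((x^2 - 1) * hv a b x))"
    using assms unfolding goodrep_def by blast
  also have "\<dots> = (\<Sum>g\<leftarrow>gs. poly (fst g) x ^ 2) - (\<Sum>g\<leftarrow>gs. poly (snd g) x ^ 2) * ((x^2 - 1) * hv a b x)"
    by (simp add: sum_list_subtractf sum_list_mult_const)
  finally show ?thesis by (simp add: algebra_simps)
qed

lemma sum_list_sq_nonneg: "0 \<le> (\<Sum>g\<leftarrow>gs. (f g)^2::real)"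
  by (induct gs) auto

lemma gram_diag:
  assumes inj: "inj xs" and rep: "goodrep a b n gs"
    and pts: "\<forall>j\<le>n. \<bar>xs j\<bar> < 1 \<and> hv a b (xs j) > 0" and s: "s < mm n"
  shows "Gr xs n gs s s \<le> (\<Sum>j\<le>n. 1 + 1 / hv a b (xs j))"
proof -
  define K where "K = (\<Sum>j\<le>n. 1 + 1 / hv a b (xs j))"
  have Kj: "1 + 1 / hv a b (xs j) \<le> K" if "j \<le> n" for j
    unfolding K_def using pts that by (intro member_le_sum) auto
  have key: "(\<Sum>g\<leftarrow>gs. poly (fst g) (xs j) ^ 2) \<le> 1 \<and> (\<Sum>g\<leftarrow>gs. poly (snd g) (xs j) ^ 2) \<le> 1 / hv a b (xs j)"
    if j: "j \<le> n" for j
  proof -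
    let ?x = "xs j"
    let ?V = "\<Sum>g\<leftarrow>gs. poly (snd g) ?x ^ 2"
    have h: "hv a b ?x > 0" and x1: "\<bar>?x\<bar> < 1" using pts j by auto
    have x2: "0 < 1 - ?x^2" "1 - ?x^2 \<le> 1" using x1 by (simp_all add: abs_square_less_1)
    have V0: "0 \<le> ?V" by (rule sum_list_sq_nonneg)
    have U0: "0 \<le> (1 - ?x^2) * (1 - hv a b ?x * ?V)"
      using rep_UV[OF rep, of ?x] sum_list_sq_nonneg[of "\<lambda>g. poly (fst g) ?x" gs] by simp
    then have w0: "0 \<le> 1 - hv a b ?x * ?V" using x2 by (simp add: zero_le_mult_iff)
    have w1: "1 - hv a b ?x * ?V \<le> 1" using h V0 by simp
    have "(1 - ?x^2) * (1 - hv a b ?x * ?V) \<le> 1" using x2 w0 w1 by (intro mult_le_one) auto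
    moreover have "?V \<le> 1 / hv a b ?x" using w0 h by (simp add: field_simps)
    ultimately show ?thesis using rep_UV[OF rep, of ?x] by simp
  qed
  show ?thesis
  proof (cases "s \<le> n")
    case True
    have "Gr xs n gs s s = (\<Sum>g\<leftarrow>gs. poly (fst g) (xs s) ^ 2)"
      using True by (simp add: Gr_def cf_def power2_eq_square)
    also have "\<dots> \<le> 1" using key True by blast
    also have "\<dots> \<le> 1 + 1 / hv a b (xs s)" using pts True by (simp add: less_imp_le)
    also have "\<dots> \<le> K" using Kj True by blast
    finally show ?thesis unfolding K_def .
  next
    case False
    define j where "j = s - Suc n"
    have j: "j \<le> n" using s False unfolding j_def mm_def by (auto split: if_splits)
    have "Gr xs n gs s s = (\<Sum>g\<leftarrow>gs. poly (snd g) (xs j) ^ 2)"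
      using False by (simp add: Gr_def cf_def power2_eq_square j_def)
    also have "\<dots> \<le> 1 / hv a b (xs j)" using key j by blast
    also have "\<dots> \<le> 1 + 1 / hv a b (xs j)" by simp
    also have "\<dots> \<le> K" using Kj j by blast
    finally show ?thesis unfolding K_def .
  qed
qed

lemma gram_bound:
  assumes inj: "inj xs" and rep: "goodrep a b n gs"
    and pts: "\<forall>j\<le>n. \<bar>xs j\<bar> < 1 \<and> hv a b (xs j) > 0" and s: "s < mm n" and t: "t < mm n"
  shows "\<bar>Gr xs n gs s t\<bar> \<le> (\<Sum>j\<le>n. 1 + 1 / hv a b (xs j))"
proof -
  have "\<bar>Gr xs n gs s t\<bar> \<le> (Gr xs n gs s s + Gr xs n gs t t) / 2"
    unfolding Gr_def using abs_sum_list_prod[of "\<lambda>g. cf xs n g s" "\<lambda>g. cf xs n g t" gs]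
    by (simp add: power2_eq_square)
  also have "\<dots> \<le> (\<Sum>j\<le>n. 1 + 1 / hv a b (xs j))"
    using gram_diag[OF inj rep pts s] gram_diag[OF inj rep pts t] by simp
  finally show ?thesis .
qed


lemma Pset_pts:
  assumes "(a, b) \<in> Pset"
  shows "\<exists>xs::nat \<Rightarrow> real. inj xs \<and> (\<forall>j. \<bar>xs j\<bar> < 1 \<and> hv a b (xs j) > 0)"
proof -
  have P2: "\<forall>x::real. \<bar>x\<bar> \<ge> 1 \<longrightarrow> poly (hpoly a b) x > 0"
    using assms unfolding Pset_def by (simp only: mem_Collect_eq case_prod_conv) blast
  have "poly (hpoly a b) 1 > 0" using P2 by simp
  then have h1: "hv a b 1 > 0" by (simp add: hpoly_def hv_def)
  have "isCont (hv a b) 1" unfolding hv_def by (intro continuous_intros)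
  then have "hv a b \<midarrow>1\<rightarrow> hv a b 1" by (simp add: isCont_def)
  then obtain d where d: "d > 0" "\<And>x. x \<noteq> 1 \<Longrightarrow> norm (x - 1) < d \<Longrightarrow> norm (hv a b x - hv a b 1) < hv a b 1"
    using LIM_D[where f="hv a b" and a=1 and L="hv a b 1" and r="hv a b 1"] h1 by auto
  define e where "e = min d 1"
  have e: "0 < e" "e \<le> d" "e \<le> 1" using d(1) by (auto simp: e_def)
  define xs where "xs = (\<lambda>j::nat. 1 + (- e) / (real j + 2))"
  have "inj xs"
  proof (rule injI)
    fix i j assume "xs i = xs j"
    then have "e / (real i + 2) = e / (real j + 2)" by (simp add: xs_def)
    then have "real i + 2 = real j + 2" using e(1) by (simp add: divide_cancel_left)
    then show "i = j" by simp
  qed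
  moreover have "\<bar>xs j\<bar> < 1 \<and> hv a b (xs j) > 0" for j
  proof -
    define t where "t = e / (real j + 2)"
    have t0: "0 < t" unfolding t_def using e by simp
    have "t \<le> e / 2" unfolding t_def using e by (intro divide_left_mono) auto
    then have t1: "2 * t \<le> e" by simp
    have xe: "xs j = 1 - t" unfolding xs_def t_def by (simp add:)
    have "\<bar>xs j\<bar> < 1" unfolding xe using t0 t1 e by auto
    moreover have "norm (hv a b (xs j) - hv a b 1) < hv a b 1"
      using t0 t1 e by (intro d(2)) (auto simp: xe)
    then have "hv a b (xs j) > 0" by auto
    ultimately show ?thesis by simp
  qed
  ultimately show ?thesis by blast
qed


lemma a_core:
  fixes q :: "nat \<Rightarrow> real \<times> real"
  assumes lim: "q \<longlonglongrightarrow> (a, b)" and P: "(a, b) \<in> Pset"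
    and reps: "\<forall>k. sos_bounded (fst (q k)) (snd (q k)) TT n"
  shows "sos_bounded a b TT n"
proof -
  obtain xs :: "nat \<Rightarrow> real" where inj: "inj xs" and pts: "\<forall>j. \<bar>xs j\<bar> < 1 \<and> hv a b (xs j) > 0"
    using Pset_pts[OF P] by blast
  have la: "(\<lambda>k. fst (q k)) \<longlonglongrightarrow> a" using tendsto_fst[OF lim] by simp
  have lb: "(\<lambda>k. snd (q k)) \<longlonglongrightarrow> b" using tendsto_snd[OF lim] by simp
  have lh: "(\<lambda>k. hv (fst (q k)) (snd (q k)) x) \<longlonglongrightarrow> hv a b x" for x
    unfolding hv_def by (intro tendsto_intros la lb)
  have "eventually (\<lambda>k. \<forall>j\<in>{..n}. hv (fst (q k)) (snd (q k)) (xs j) > hv a b (xs j) / 2) sequentially"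
  proof (rule eventually_ball_finite)
    show "finite {..n}" by simp
    show "\<forall>j\<in>{..n}. eventually (\<lambda>k. hv a b (xs j) / 2 < hv (fst (q k)) (snd (q k)) (xs j)) sequentially"
    proof
    fix j
    have "hv a b (xs j) / 2 < hv a b (xs j)" using pts by simp
    then show "eventually (\<lambda>k. hv a b (xs j) / 2 < hv (fst (q k)) (snd (q k)) (xs j)) sequentially"
      by (rule order_tendstoD(1)[OF lh])
    qed
  qed
  then obtain k0 where k0: "\<And>k j. k \<ge> k0 \<Longrightarrow> j \<le> n \<Longrightarrow> hv (fst (q k)) (snd (q k)) (xs j) > hv a b (xs j) / 2"
    unfolding eventually_sequentially by auto
  define gsk where "gsk k = (SOME gs. goodrep (fst (q k)) (snd (q k)) n gs)" for k
  have gsk: "goodrep (fst (q k)) (snd (q k)) n (gsk k)" for k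
    unfolding gsk_def using reps sos_eval by (metis someI_ex)
  define Gk where "Gk k = Gr xs n (gsk (k + k0))" for k
  define K' where "K' = (\<Sum>j\<le>n. 1 + 2 / hv a b (xs j))"
  have bnd: "\<bar>Gk k s t\<bar> \<le> K'" if "s < mm n" "t < mm n" for k s t
  proof -
    have hk: "hv (fst (q (k + k0))) (snd (q (k + k0))) (xs j) > hv a b (xs j) / 2" if "j \<le> n" for j
      using k0[of "k + k0" j] that by simp
    have pk: "\<forall>j\<le>n. \<bar>xs j\<bar> < 1 \<and> hv (fst (q (k + k0))) (snd (q (k + k0))) (xs j) > 0"
      using hk pts by (metis half_gt_zero order_less_trans)
    have "\<bar>Gk k s t\<bar> \<le> (\<Sum>j\<le>n. 1 + 1 / hv (fst (q (k + k0))) (snd (q (k + k0))) (xs j))"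
      unfolding Gk_def by (rule gram_bound[OF inj gsk pk that])
    also have "\<dots> \<le> K'"
      unfolding K'_def
    proof (rule sum_mono)
      fix j assume j: "j \<in> {..n}"
      have "1 / hv (fst (q (k + k0))) (snd (q (k + k0))) (xs j) \<le> 1 / (hv a b (xs j) / 2)"
      proof -
        have h0: "0 < hv a b (xs j)" using pts by simp
        have hk0: "hv a b (xs j) / 2 < hv (fst (q (k + k0))) (snd (q (k + k0))) (xs j)" using hk j by simp
        then have "0 < hv (fst (q (k + k0))) (snd (q (k + k0))) (xs j)" using h0 by linarith
        then show ?thesis using h0 hk0 by (intro divide_left_mono) (auto intro: mult_pos_pos)
      qed
      then show "1 + 1 / hv (fst (q (k + k0))) (snd (q (k + k0))) (xs j) \<le> 1 + 2 / hv a b (xs j)" by simp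
    qed
    finally show ?thesis .
  qed
  define I where "I = {..<mm n} \<times> {..<mm n}"
  have "\<exists>r l. strict_mono r \<and> (\<forall>i\<in>I. (\<lambda>k. (\<lambda>i k. Gk k (fst i) (snd i)) i (r k)) \<longlonglongrightarrow> l i)"
  proof (rule subseq_finite)
    show "finite I" by (simp add: I_def)
    show "\<forall>i\<in>I. bounded (range ((\<lambda>i k. Gk k (fst i) (snd i)) i))"
      using bnd by (auto simp: I_def intro!: Elementary_Metric_Spaces.boundedI)
  qed
  then obtain r l where r: "strict_mono r" and rl: "\<forall>i\<in>I. (\<lambda>k. Gk (r k) (fst i) (snd i)) \<longlonglongrightarrow> l i"
    by auto
  define H where "H s t = l (s, t)" for s t
  have GL: "(\<lambda>k. Gk (r k) s t) \<longlonglongrightarrow> H s t" if "s < mm n" "t < mm n" for s t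
    using rl that by (auto simp: I_def H_def)
  have sm: "strict_mono (\<lambda>k. r k + k0)" using r by (simp add: strict_mono_def)
  have lq: "(\<lambda>k. q (r k + k0)) \<longlonglongrightarrow> (a, b)"
    using LIMSEQ_subseq_LIMSEQ[OF lim sm] by (simp add: o_def)
  have la': "(\<lambda>k. fst (q (r k + k0))) \<longlonglongrightarrow> a" using tendsto_fst[OF lq] by simp
  have lb': "(\<lambda>k. snd (q (r k + k0))) \<longlonglongrightarrow> b" using tendsto_snd[OF lq] by simp
  have repk: "goodrep (fst (q (r k + k0))) (snd (q (r k + k0))) n (gsk (r k + k0))" for k by (rule gsk)
  have GkE: "Gk (r k) = Gr xs n (gsk (r k + k0))" for k by (simp add: Gk_def)
  show ?thesis
  proof (rule gram_to_rep[OF inj])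
    show "\<forall>s<mm n. \<forall>t<mm n. H s t = H t s"
    proof (intro allI impI)
      fix s t assume st: "s < mm n" "t < mm n"
      have "(\<lambda>k. Gk (r k) t s) = (\<lambda>k. Gk (r k) s t)" by (simp add: Gk_def Gr_def mult.commute)
      then have "(\<lambda>k. Gk (r k) s t) \<longlonglongrightarrow> H t s" using GL[of t s] st by simp
      then show "H s t = H t s" using GL[OF st] LIMSEQ_unique by blast
    qed
    show "\<forall>y. 0 \<le> qf (mm n) H y"
    proof
      fix y
      have "(\<lambda>k. qf (mm n) (Gk (r k)) y) \<longlonglongrightarrow> qf (mm n) H y"
        unfolding qf_def by (intro tendsto_intros GL) auto
      moreover have "0 \<le> qf (mm n) (Gk (r k)) y" for k
        unfolding GkE by (rule rep_to_gram(3)[OF inj repk])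
      ultimately show "0 \<le> qf (mm n) H y" by (intro LIMSEQ_le_const) auto
    qed
    show "\<forall>x. 1 - x^2 = Qf xs n H a b x"
    proof
      fix x
      have "(\<lambda>k. Qf xs n (Gk (r k)) (fst (q (r k + k0))) (snd (q (r k + k0))) x) \<longlonglongrightarrow> Qf xs n H a b x"
        unfolding Qf_def hv_def by (intro tendsto_intros GL la' lb') auto
      moreover have "Qf xs n (Gk (r k)) (fst (q (r k + k0))) (snd (q (r k + k0))) x = 1 - x^2" for k
        unfolding GkE using rep_to_gram(1)[OF inj repk] by simp
      ultimately have "(\<lambda>k. 1 - x^2) \<longlonglongrightarrow> Qf xs n H a b x" by simp
      then show "1 - x^2 = Qf xs n H a b x" using LIMSEQ_unique tendsto_const by blast
    qed
    show "\<forall>x. Qg xs n H x = 0"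
    proof
      fix x
      have "(\<lambda>k. Qg xs n (Gk (r k)) x) \<longlonglongrightarrow> Qg xs n H x"
        unfolding Qg_def by (intro tendsto_intros GL) auto
      moreover have "Qg xs n (Gk (r k)) x = 0" for k
        unfolding GkE using rep_to_gram(2)[OF inj repk] by simp
      ultimately have "(\<lambda>k. 0) \<longlonglongrightarrow> Qg xs n H x" by simp
      then show "Qg xs n H x = 0" using LIMSEQ_unique tendsto_const by blast
    qed
  qed
qed


theorem corollary4p6:
  shows "(\<forall>n::nat. closedin (top_of_set Pset) {p \<in> Pset. Nfun p \<le> enat n})
         \<and> (\<forall>(s :: nat \<Rightarrow> real \<times> real) p. (\<forall>\<nu>. s \<nu> \<in> Pset) \<longrightarrow> s \<longlonglongrightarrow> p \<longrightarrow>
              p \<in> P'set - {(0, -1)} \<longrightarrow>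
              (\<forall>M::nat. eventually (\<lambda>\<nu>. enat M < Nfun (s \<nu>)) sequentially))"
proof (intro conjI allI impI)
  fix n :: nat
  show "closedin (top_of_set Pset) {p \<in> Pset. Nfun p \<le> enat n}"
    unfolding closedin_limpt
  proof (intro conjI allI impI)
    show "{p \<in> Pset. Nfun p \<le> enat n} \<subseteq> Pset" by auto
    fix x assume x: "x islimpt {p \<in> Pset. Nfun p \<le> enat n} \<and> x \<in> Pset"
    then obtain f where f: "\<forall>k. f k \<in> {p \<in> Pset. Nfun p \<le> enat n} - {x}" "f \<longlonglongrightarrow> x"
      using islimpt_sequential by blast
    obtain a b where ab: "x = (a, b)" by fastforce
    have "sos_bounded a b TT n"
    proof (rule a_core)
      show "f \<longlonglongrightarrow> (a, b)" using f(2) ab by simp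
      show "(a, b) \<in> Pset" using x ab by simp
      show "\<forall>k. sos_bounded (fst (f k)) (snd (f k)) TT n" using f(1) Nfun_le by blast
    qed
    then show "x \<in> {p \<in> Pset. Nfun p \<le> enat n}" using x ab Nfun_le[of x n] by simp
  qed
next
  fix s :: "nat \<Rightarrow> real \<times> real" and p and M :: nat
  assume "\<forall>\<nu>. s \<nu> \<in> Pset" "s \<longlonglongrightarrow> p" "p \<in> P'set - {(0, -1)}"
  then show "eventually (\<lambda>\<nu>. enat M < Nfun (s \<nu>)) sequentially" by (rule partb)
qed


end
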